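(* For $N\ge3$, inside $O_N^+$: $$O_N\cap\bar O_N=H_N,\quad O_N\cap\bar O_N^*=H_N,\quad O_N^*\cap\bar O_N=H_N,\quad O_N^*\cap\bar O_N^*=H_N^*.$$ For $N=2$: $O_2\cap\bar O_2=H_2$, $O_2\cap\bar O_2^*=O_2$, $O_2^*\cap\bar O_2=\bar O_2$, $O_2^*\cap\bar O_2^*=O_2^+$.
   Context: $C(O_N^+)$ is the universal $C^*$-algebra generated by self-adjoint $u_{ij}$ ($1\le i,j\le N$) with $u=(u_{ij})$ orthogonal, a compact quantum group with $\Delta(u_{ij})=\sum_ku_{ik}\otimes u_{kj}$. Closed quantum subgroups are defined by imposing relations on the $u_{ij}$; the intersection of two is obtained by imposing both sets of relations. With $a,b,c$ ranging over the entries $u_{ij}$: $O_N$: all entries commute (orthogonal group); $H_N\subset O_N$: signed permutation matrices; $O_N^*$: $abc=cba$ for all $a,b,c$; $\bar O_N$: $ab=-ba$ if $a\ne b$ are on the same row or same column, $ab=ba$ otherwise; $\bar O_N^*$: $abc=-cba$ if $(r\le2,s=3)$ or $(r=3,s\le2)$, and $abc=cba$ if $(r\le2,s\le2)$ or $r=s=3$, where $r$ and $s$ are the numbers of distinct rows and of distinct columns of $u$ containing $a,b,c$; $H_N^+$: $u_{ij}u_{ik}=0=u_{ji}u_{ki}$ for $j\ne k$; $H_N^*=H_N^+\cap O_N^*$. *)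

theory Defs
  imports "HOL-Analysis.Analysis"
begin

text \<open>Unital complex C*-algebras, encoded as unital real Banach algebras with an
  involution satisfying the C*-identity, together with a central element J playing
  the role of the scalar i (J*J = -1, adj J = -J, J isometric).  Complex scalar
  multiplication is then (a + b i) x = a x + b (J x).\<close>

class cstar_algebra = real_normed_algebra_1 + banach +
  fixes adj :: "'a \<Rightarrow> 'a"
    and J :: 'a
  assumes adj_adj: "adj (adj x) = x"
    and adj_add: "adj (x + y) = adj x + adj y"
    and adj_mult: "adj (x * y) = adj y * adj x"
    and adj_scaleR: "adj (scaleR r x) = scaleR r (adj x)"
    and cstar_identity: "norm (adj x * x) = (norm x)\<^sup>2"
    and J_central: "J * x = x * J"
    and J_square: "J * J = - 1"
    and adj_J: "adj J = - J"
    and norm_J_mult: "norm (J * x) = norm x"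

text \<open>A family u i j (i, j < N) of elements of a C*-algebra A is a representation of the
  defining relations of C(O_N^+): self-adjoint entries and u orthogonal.
  Indices are 0-based: {..<N}.\<close>

definition is_orth :: "nat \<Rightarrow> (nat \<Rightarrow> nat \<Rightarrow> 'a::cstar_algebra) \<Rightarrow> bool" where
  "is_orth N u \<longleftrightarrow>
     (\<forall>i<N. \<forall>j<N. adj (u i j) = u i j) \<and>
     (\<forall>i<N. \<forall>k<N. (\<Sum>j<N. u i j * u k j) = (if i = k then 1 else 0)) \<and>
     (\<forall>i<N. \<forall>k<N. (\<Sum>j<N. u j i * u j k) = (if i = k then 1 else 0))"

definition rel_O :: "nat \<Rightarrow> (nat \<Rightarrow> nat \<Rightarrow> 'a::cstar_algebra) \<Rightarrow> bool" where
  "rel_O N u \<longleftrightarrow> (\<forall>i<N. \<forall>j<N. \<forall>k<N. \<forall>l<N. u i j * u k l = u k l * u i j)"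

definition rel_Ostar :: "nat \<Rightarrow> (nat \<Rightarrow> nat \<Rightarrow> 'a::cstar_algebra) \<Rightarrow> bool" where
  "rel_Ostar N u \<longleftrightarrow>
     (\<forall>i1<N. \<forall>j1<N. \<forall>i2<N. \<forall>j2<N. \<forall>i3<N. \<forall>j3<N.
        u i1 j1 * u i2 j2 * u i3 j3 = u i3 j3 * u i2 j2 * u i1 j1)"

definition rel_Obar :: "nat \<Rightarrow> (nat \<Rightarrow> nat \<Rightarrow> 'a::cstar_algebra) \<Rightarrow> bool" where
  "rel_Obar N u \<longleftrightarrow> (\<forall>i<N. \<forall>j<N. \<forall>k<N. \<forall>l<N.
      (if (i, j) \<noteq> (k, l) \<and> (i = k \<or> j = l)
       then u i j * u k l = - (u k l * u i j)
       else u i j * u k l = u k l * u i j))"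

definition rel_Obarstar :: "nat \<Rightarrow> (nat \<Rightarrow> nat \<Rightarrow> 'a::cstar_algebra) \<Rightarrow> bool" where
  "rel_Obarstar N u \<longleftrightarrow>
     (\<forall>i1<N. \<forall>j1<N. \<forall>i2<N. \<forall>j2<N. \<forall>i3<N. \<forall>j3<N.
        (let r = card {i1, i2, i3}; s = card {j1, j2, j3} in
          (if (r \<le> 2 \<and> s = 3) \<or> (r = 3 \<and> s \<le> 2)
           then u i1 j1 * u i2 j2 * u i3 j3 = - (u i3 j3 * u i2 j2 * u i1 j1)
           else u i1 j1 * u i2 j2 * u i3 j3 = u i3 j3 * u i2 j2 * u i1 j1)))"

definition rel_Hplus :: "nat \<Rightarrow> (nat \<Rightarrow> nat \<Rightarrow> 'a::cstar_algebra) \<Rightarrow> bool" where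
  "rel_Hplus N u \<longleftrightarrow> (\<forall>i<N. \<forall>j<N. \<forall>k<N. j \<noteq> k \<longrightarrow>
      u i j * u i k = 0 \<and> u j i * u k i = 0)"

text \<open>H_N (signed permutation matrices) as a closed subgroup of O_N: commutative
  entries and at most one nonzero entry in each row/column, i.e. H_N = O_N \<inter> H_N^+
  (the zero set of these relations inside O_N is exactly the signed permutation matrices).\<close>
definition rel_H :: "nat \<Rightarrow> (nat \<Rightarrow> nat \<Rightarrow> 'a::cstar_algebra) \<Rightarrow> bool" where
  "rel_H N u \<longleftrightarrow> rel_O N u \<and> rel_Hplus N u"

definition rel_Hstar :: "nat \<Rightarrow> (nat \<Rightarrow> nat \<Rightarrow> 'a::cstar_algebra) \<Rightarrow> bool" where
  "rel_Hstar N u \<longleftrightarrow> rel_Hplus N u \<and> rel_Ostar N u"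

end

theory Submission
  imports Defs
begin

lemma dbl_zero: "(t::'a::real_vector) + t = 0 \<Longrightarrow> t = 0"
  by (metis scaleR_2 scaleR_eq_0_iff zero_neq_numeral)

lemma neg_self_zero: "(t::'a::real_vector) = - t \<Longrightarrow> t = 0"
  by (metis dbl_zero add.right_inverse)

lemma row_one: "is_orth N u \<Longrightarrow> i < N \<Longrightarrow> (\<Sum>j<N. u i j * u i j) = 1"
  unfolding is_orth_def by auto

lemma col_one: "is_orth N u \<Longrightarrow> i < N \<Longrightarrow> (\<Sum>j<N. u j i * u j i) = 1"
  unfolding is_orth_def by auto

lemma kill_col:
  assumes "is_orth N u" "m < N" "\<forall>p<N. X * u p m = 0"
  shows "X = 0"
proof -
  have "X = X * (\<Sum>p<N. u p m * u p m)" using col_one[OF assms(1,2)] by simp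
  also have "\<dots> = (\<Sum>p<N. (X * u p m) * u p m)" by (simp add: sum_distrib_left mult.assoc)
  also have "\<dots> = 0" using assms(3) by simp
  finally show ?thesis .
qed

lemma kill_row:
  assumes "is_orth N u" "m < N" "\<forall>q<N. X * u m q = 0"
  shows "X = 0"
proof -
  have "X = X * (\<Sum>q<N. u m q * u m q)" using row_one[OF assms(1,2)] by simp
  also have "\<dots> = (\<Sum>q<N. (X * u m q) * u m q)" by (simp add: sum_distrib_left mult.assoc)
  also have "\<dots> = 0" using assms(3) by simp
  finally show ?thesis .
qed

lemma cube_row:
  assumes "is_orth N u" "rel_Hplus N u" "i < N" "j < N"
  shows "u i j = u i j * u i j * u i j"
proof -
  have "u i j = u i j * (\<Sum>q<N. u i q * u i q)" unfolding row_one[OF assms(1,3)] by simp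
  also have "\<dots> = (\<Sum>q<N. (u i j * u i q) * u i q)" by (simp add: sum_distrib_left mult.assoc)
  also have "\<dots> = (\<Sum>q<N. if q = j then u i j * u i j * u i j else 0)"
  proof (rule sum.cong[OF refl])
    fix q assume "q \<in> {..<N}"
    then show "(u i j * u i q) * u i q = (if q = j then u i j * u i j * u i j else 0)"
    proof (cases "q = j")
      case False
      have "u i j * u i q = 0" using assms(2,3,4) \<open>q \<in> {..<N}\<close> False unfolding rel_Hplus_def by simp
      then show ?thesis using False by simp
    qed simp
  qed
  also have "\<dots> = u i j * u i j * u i j" using assms(4) by simp
  finally show ?thesis .
qed

lemma cube_col:
  assumes "is_orth N u" "rel_Hplus N u" "i < N" "j < N"
  shows "u j i = u j i * u j i * u j i"
proof -
  have "u j i = u j i * (\<Sum>q<N. u q i * u q i)" unfolding col_one[OF assms(1,3)] by simp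
  also have "\<dots> = (\<Sum>q<N. (u j i * u q i) * u q i)" by (simp add: sum_distrib_left mult.assoc)
  also have "\<dots> = (\<Sum>q<N. if q = j then u j i * u j i * u j i else 0)"
  proof (rule sum.cong[OF refl])
    fix q assume "q \<in> {..<N}"
    then show "(u j i * u q i) * u q i = (if q = j then u j i * u j i * u j i else 0)"
    proof (cases "q = j")
      case False
      have "u j i * u q i = 0" using assms(2,3,4) \<open>q \<in> {..<N}\<close> False unfolding rel_Hplus_def by simp
      then show ?thesis using False by simp
    qed simp
  qed
  also have "\<dots> = u j i * u j i * u j i" using assms(4) by simp
  finally show ?thesis .
qed

lemma third: "(3::nat) \<le> N \<Longrightarrow> \<exists>m<N. m \<noteq> j \<and> m \<noteq> k"
proof -
  assume N: "3 \<le> N"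
  show ?thesis
  proof (cases "j \<noteq> 0 \<and> k \<noteq> 0")
    case True then show ?thesis using N by (intro exI[of _ 0]) simp
  next
    case F: False
    show ?thesis
    proof (cases "j \<noteq> 1 \<and> k \<noteq> 1")
      case True then show ?thesis using N by (intro exI[of _ 1]) simp
    next
      case False then show ?thesis using N F by (intro exI[of _ 2]) auto
    qed
  qed
qed
lemma card3_iff: "card {a, b, c} = 3 \<longleftrightarrow> a \<noteq> b \<and> a \<noteq> c \<and> b \<noteq> c"
  by (auto simp: card_insert_if)

lemma card_le2_iff: "card {a, b, c} \<le> 2 \<longleftrightarrow> \<not> (a \<noteq> b \<and> a \<noteq> c \<and> b \<noteq> c)"
  by (auto simp: card_insert_if)

lemma O_rev3:
  assumes "rel_O N u" "i1<N" "j1<N" "i2<N" "j2<N" "i3<N" "j3<N"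
  shows "u i3 j3 * u i2 j2 * u i1 j1 = u i1 j1 * u i2 j2 * u i3 j3"
proof -
  have c: "\<And>a b c d. a<N \<Longrightarrow> b<N \<Longrightarrow> c<N \<Longrightarrow> d<N \<Longrightarrow> u a b * u c d = u c d * u a b"
    using assms(1) unfolding rel_O_def by blast
  have "u i3 j3 * u i2 j2 * u i1 j1 = u i2 j2 * (u i3 j3 * u i1 j1)"
    using c[of i3 j3 i2 j2] assms by (simp add: mult.assoc)
  also have "\<dots> = (u i2 j2 * u i1 j1) * u i3 j3"
    using c[of i3 j3 i1 j1] assms by (simp add: mult.assoc)
  also have "\<dots> = u i1 j1 * u i2 j2 * u i3 j3"
    using c[of i2 j2 i1 j1] assms by simp
  finally show ?thesis .
qed

definition T3 :: "'a::real_algebra_1 \<Rightarrow> 'a \<Rightarrow> 'a \<Rightarrow> 'a" where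
  "T3 p q r = p * q * r - r * q * p"

lemma T3_add1: "T3 (p + p') q r = T3 p q r + T3 p' q r" by (simp add: T3_def algebra_simps)
lemma T3_add2: "T3 p (q + q') r = T3 p q r + T3 p q' r" by (simp add: T3_def algebra_simps)
lemma T3_add3: "T3 p q (r + r') = T3 p q r + T3 p q r'" by (simp add: T3_def algebra_simps)
lemma T3_diff1: "T3 (p - p') q r = T3 p q r - T3 p' q r" by (simp add: T3_def algebra_simps)
lemma T3_diff2: "T3 p (q - q') r = T3 p q r - T3 p q' r" by (simp add: T3_def algebra_simps)
lemma T3_diff3: "T3 p q (r - r') = T3 p q r - T3 p q r'" by (simp add: T3_def algebra_simps)
lemma T3_scale: "T3 (s *\<^sub>R p) (t *\<^sub>R q) (v *\<^sub>R r) = (s * t * v) *\<^sub>R T3 p q r"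
  by (simp add: T3_def scaleR_right_diff_distrib mult_ac)

lemma basis_hc:
  fixes x y z w :: "'a::real_algebra_1"
  assumes r1: "y * x = - (x * y)" and r2: "z * x = - (x * z)" and r3: "w * x = x * w"
    and r4: "z * y = y * z" and r5: "w * y = - (y * w)" and r6: "w * z = - (z * w)"
  shows "\<forall>p\<in>{x,y,z,w}. \<forall>q\<in>{x,y,z,w}. \<forall>r\<in>{x,y,z,w}. T3 p q r = 0"
proof -
  have r1': "\<And>t. y * (x * t) = - (x * (y * t))" using r1 by (metis mult.assoc mult_minus_left)
  have r2': "\<And>t. z * (x * t) = - (x * (z * t))" using r2 by (metis mult.assoc mult_minus_left)
  have r3': "\<And>t. w * (x * t) = x * (w * t)" using r3 by (metis mult.assoc)
  have r4': "\<And>t. z * (y * t) = y * (z * t)" using r4 by (metis mult.assoc)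
  have r5': "\<And>t. w * (y * t) = - (y * (w * t))" using r5 by (metis mult.assoc mult_minus_left)
  have r6': "\<And>t. w * (z * t) = - (z * (w * t))" using r6 by (metis mult.assoc mult_minus_left)
  show ?thesis
    by (simp add: T3_def mult.assoc r1 r2 r3 r4 r5 r6 r1' r2' r3' r4' r5' r6')
qed

lemma hc2:
  fixes a b c d :: "'a::real_algebra_1"
  assumes e1: "a*a + b*b = 1" and e2: "a*a + c*c = 1" and e3: "b*b + d*d = 1"
    and z1: "a*c + b*d = 0" and z2: "c*a + d*b = 0" and z3: "a*b + c*d = 0" and z4: "b*a + d*c = 0"
  shows "\<forall>p\<in>{a,b,c,d}. \<forall>q\<in>{a,b,c,d}. \<forall>r\<in>{a,b,c,d}. p*q*r = r*q*p"
proof -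
  define x where "x = a + d"
  define y where "y = a - d"
  define z where "z = b + c"
  define w where "w = b - c"
  have sq1: "d*d = a*a" using e1 e2 e3 by (metis add_left_cancel add.commute)
  have sq2: "c*c = b*b" using e1 e2 by (metis add_left_cancel)
  have "x*y + y*x = 0" unfolding x_def y_def by (simp add: algebra_simps sq1)
  then have r1: "y * x = - (x * y)" by (simp add: eq_neg_iff_add_eq_0 add.commute)
  have "x*z + z*x = (a*b + c*d) + (a*c + b*d) + (c*a + d*b) + (b*a + d*c)"
    unfolding x_def z_def by (simp add: algebra_simps)
  then have "x*z + z*x = 0" using z1 z2 z3 z4 by simp
  then have r2: "z * x = - (x * z)" by (simp add: eq_neg_iff_add_eq_0 add.commute)
  have "x*w - w*x = (a*b + c*d) - (b*a + d*c) + (c*a + d*b) - (a*c + b*d)"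
    unfolding x_def w_def by (simp add: algebra_simps)
  then have "x*w - w*x = 0" using z1 z2 z3 z4 by simp
  then have r3: "w * x = x * w" by simp
  have "y*z - z*y = (a*b + c*d) - (b*a + d*c) + (a*c + b*d) - (c*a + d*b)"
    unfolding y_def z_def by (simp add: algebra_simps)
  then have "y*z - z*y = 0" using z1 z2 z3 z4 by simp
  then have r4: "z * y = y * z" by simp
  have "y*w + w*y = (a*b + c*d) + (b*a + d*c) - (a*c + b*d) - (c*a + d*b)"
    unfolding y_def w_def by (simp add: algebra_simps)
  then have "y*w + w*y = 0" using z1 z2 z3 z4 by simp
  then have r5: "w * y = - (y * w)" by (simp add: eq_neg_iff_add_eq_0 add.commute)
  have "z*w + w*z = 0" unfolding z_def w_def by (simp add: algebra_simps sq2)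
  then have r6: "w * z = - (z * w)" by (simp add: eq_neg_iff_add_eq_0 add.commute)
  note B = basis_hc[OF r1 r2 r3 r4 r5 r6]
  have Bx: "T3 p q r = 0" if "p\<in>{x,y,z,w}" "q\<in>{x,y,z,w}" "r\<in>{x,y,z,w}" for p q r
    using B that by blast
  have sa: "2 *\<^sub>R a = x + y" unfolding x_def y_def by (simp add: scaleR_2)
  have sd: "2 *\<^sub>R d = x - y" unfolding x_def y_def by (simp add: scaleR_2)
  have sb: "2 *\<^sub>R b = z + w" unfolding z_def w_def by (simp add: scaleR_2)
  have sc: "2 *\<^sub>R c = z - w" unfolding z_def w_def by (simp add: scaleR_2)
  have S: "\<forall>p\<in>{x+y,x-y,z+w,z-w}. \<forall>q\<in>{x+y,x-y,z+w,z-w}. \<forall>r\<in>{x+y,x-y,z+w,z-w}. T3 p q r = 0"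
    by (simp add: T3_add1 T3_add2 T3_add3 T3_diff1 T3_diff2 T3_diff3 Bx)
  have "T3 p q r = 0" if "p\<in>{a,b,c,d}" "q\<in>{a,b,c,d}" "r\<in>{a,b,c,d}" for p q r
  proof -
    have m: "2 *\<^sub>R v \<in> {x+y,x-y,z+w,z-w}" if "v \<in> {a,b,c,d}" for v
      using that sa sb sc sd by auto
    have "T3 (2 *\<^sub>R p) (2 *\<^sub>R q) (2 *\<^sub>R r) = 0" using S m that by blast
    then show ?thesis by (simp add: T3_scale)
  qed
  then show ?thesis by (simp add: T3_def)
qed

lemma sum2: "(\<Sum>j<(2::nat). f j) = f 0 + f 1"
  by (simp add: numeral_2_eq_2)

lemma orth2_Ostar:
  assumes "is_orth 2 u"
  shows "rel_Ostar 2 u"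
proof -
  have R: "\<forall>i<2. \<forall>k<2. (\<Sum>j<2. u i j * u k j) = (if i = k then 1 else 0)"
   and C: "\<forall>i<2. \<forall>k<2. (\<Sum>j<2. u j i * u j k) = (if i = k then 1 else 0)"
    using assms unfolding is_orth_def by blast+
  have e1: "u 0 0 * u 0 0 + u 0 1 * u 0 1 = 1" using R[rule_format, of 0 0] by (simp add: sum2)
  have e2: "u 0 0 * u 0 0 + u 1 0 * u 1 0 = 1" using C[rule_format, of 0 0] by (simp add: sum2)
  have e3: "u 0 1 * u 0 1 + u 1 1 * u 1 1 = 1" using C[rule_format, of 1 1] by (simp add: sum2)
  have z1: "u 0 0 * u 1 0 + u 0 1 * u 1 1 = 0" using R[rule_format, of 0 1] by (simp add: sum2)
  have z2: "u 1 0 * u 0 0 + u 1 1 * u 0 1 = 0" using R[rule_format, of 1 0] by (simp add: sum2)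
  have z3: "u 0 0 * u 0 1 + u 1 0 * u 1 1 = 0" using C[rule_format, of 0 1] by (simp add: sum2)
  have z4: "u 0 1 * u 0 0 + u 1 1 * u 1 0 = 0" using C[rule_format, of 1 0] by (simp add: sum2)
  note H = hc2[OF e1 e2 e3 z1 z2 z3 z4]
  have mem: "u i j \<in> {u 0 0, u 0 1, u 1 0, u 1 1}" if "i < 2" "j < 2" for i j
    using that by (auto simp: less_2_cases_iff)
  show ?thesis unfolding rel_Ostar_def
  proof (intro allI impI)
    fix i1 j1 i2 j2 i3 j3 :: nat
    assume "i1 < 2" "j1 < 2" "i2 < 2" "j2 < 2" "i3 < 2" "j3 < 2"
    then show "u i1 j1 * u i2 j2 * u i3 j3 = u i3 j3 * u i2 j2 * u i1 j1"
      using H mem by blast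
  qed
qed

lemma OD: "rel_O N u \<Longrightarrow> i<N \<Longrightarrow> j<N \<Longrightarrow> k<N \<Longrightarrow> l<N \<Longrightarrow> u i j * u k l = u k l * u i j"
  unfolding rel_O_def by blast

lemma OstarD: "rel_Ostar N u \<Longrightarrow> i1<N \<Longrightarrow> j1<N \<Longrightarrow> i2<N \<Longrightarrow> j2<N \<Longrightarrow> i3<N \<Longrightarrow> j3<N \<Longrightarrow>
   u i1 j1 * u i2 j2 * u i3 j3 = u i3 j3 * u i2 j2 * u i1 j1"
  unfolding rel_Ostar_def by blast

lemma HplusR: "rel_Hplus N u \<Longrightarrow> i<N \<Longrightarrow> j<N \<Longrightarrow> k<N \<Longrightarrow> j \<noteq> k \<Longrightarrow> u i j * u i k = 0"
  unfolding rel_Hplus_def by blast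

lemma HplusC: "rel_Hplus N u \<Longrightarrow> i<N \<Longrightarrow> j<N \<Longrightarrow> k<N \<Longrightarrow> j \<noteq> k \<Longrightarrow> u j i * u k i = 0"
  unfolding rel_Hplus_def by blast

lemma HplusI:
  assumes "\<And>i j k. i<N \<Longrightarrow> j<N \<Longrightarrow> k<N \<Longrightarrow> j \<noteq> k \<Longrightarrow> u i j * u i k = 0"
    and "\<And>i j k. i<N \<Longrightarrow> j<N \<Longrightarrow> k<N \<Longrightarrow> j \<noteq> k \<Longrightarrow> u j i * u k i = 0"
  shows "rel_Hplus N u"
  unfolding rel_Hplus_def using assms by blast

lemma ObarD: "rel_Obar N u \<Longrightarrow> i<N \<Longrightarrow> j<N \<Longrightarrow> k<N \<Longrightarrow> l<N \<Longrightarrow>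
   (if (i, j) \<noteq> (k, l) \<and> (i = k \<or> j = l)
       then u i j * u k l = - (u k l * u i j)
       else u i j * u k l = u k l * u i j)"
  unfolding rel_Obar_def by blast

lemma ObarA: "rel_Obar N u \<Longrightarrow> i<N \<Longrightarrow> j<N \<Longrightarrow> k<N \<Longrightarrow> l<N \<Longrightarrow> (i, j) \<noteq> (k, l) \<Longrightarrow> i = k \<or> j = l \<Longrightarrow>
   u i j * u k l = - (u k l * u i j)"
  using ObarD[of N u i j k l] by simp

lemma ObarC: "rel_Obar N u \<Longrightarrow> i<N \<Longrightarrow> j<N \<Longrightarrow> k<N \<Longrightarrow> l<N \<Longrightarrow> i \<noteq> k \<Longrightarrow> j \<noteq> l \<Longrightarrow>
   u i j * u k l = u k l * u i j"
  using ObarD[of N u i j k l] by simp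

lemma ObarI:
  assumes "\<And>i j k l. i<N \<Longrightarrow> j<N \<Longrightarrow> k<N \<Longrightarrow> l<N \<Longrightarrow> (i, j) \<noteq> (k, l) \<Longrightarrow> i = k \<or> j = l \<Longrightarrow>
      u i j * u k l = - (u k l * u i j)"
    and "\<And>i j k l. i<N \<Longrightarrow> j<N \<Longrightarrow> k<N \<Longrightarrow> l<N \<Longrightarrow> \<not> ((i, j) \<noteq> (k, l) \<and> (i = k \<or> j = l)) \<Longrightarrow>
      u i j * u k l = u k l * u i j"
  shows "rel_Obar N u"
  unfolding rel_Obar_def using assms by simp

definition negc :: "nat \<Rightarrow> nat \<Rightarrow> nat \<Rightarrow> nat \<Rightarrow> nat \<Rightarrow> nat \<Rightarrow> bool" where
  "negc i1 j1 i2 j2 i3 j3 \<longleftrightarrow> (card {i1, i2, i3} \<le> 2 \<and> card {j1, j2, j3} = 3) \<or> (card {i1, i2, i3} = 3 \<and> card {j1, j2, j3} \<le> 2)"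

lemma ObsD: "rel_Obarstar N u \<Longrightarrow> i1<N \<Longrightarrow> j1<N \<Longrightarrow> i2<N \<Longrightarrow> j2<N \<Longrightarrow> i3<N \<Longrightarrow> j3<N \<Longrightarrow>
   (if negc i1 j1 i2 j2 i3 j3
           then u i1 j1 * u i2 j2 * u i3 j3 = - (u i3 j3 * u i2 j2 * u i1 j1)
           else u i1 j1 * u i2 j2 * u i3 j3 = u i3 j3 * u i2 j2 * u i1 j1)"
  unfolding rel_Obarstar_def negc_def Let_def by blast

lemma ObsI:
  assumes "\<And>i1 j1 i2 j2 i3 j3. i1<N \<Longrightarrow> j1<N \<Longrightarrow> i2<N \<Longrightarrow> j2<N \<Longrightarrow> i3<N \<Longrightarrow> j3<N \<Longrightarrow>
   (if negc i1 j1 i2 j2 i3 j3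
           then u i1 j1 * u i2 j2 * u i3 j3 = - (u i3 j3 * u i2 j2 * u i1 j1)
           else u i1 j1 * u i2 j2 * u i3 j3 = u i3 j3 * u i2 j2 * u i1 j1)"
  shows "rel_Obarstar N u"
  using assms unfolding rel_Obarstar_def negc_def Let_def by blast

lemma negc_row: "j \<noteq> k \<Longrightarrow> m \<noteq> j \<Longrightarrow> m \<noteq> k \<Longrightarrow> negc i j i k p m"
  unfolding negc_def by (auto simp: card_insert_if)

lemma negc_col: "j \<noteq> k \<Longrightarrow> m \<noteq> j \<Longrightarrow> m \<noteq> k \<Longrightarrow> negc j i k i m q"
  unfolding negc_def by (auto simp: card_insert_if)

lemma negc_cases: "negc i1 j1 i2 j2 i3 j3 \<Longrightarrow>
   (j1 \<noteq> j2 \<and> j1 \<noteq> j3 \<and> j2 \<noteq> j3 \<and> (i1 = i2 \<or> i2 = i3 \<or> i1 = i3)) \<or>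
   (i1 \<noteq> i2 \<and> i1 \<noteq> i3 \<and> i2 \<noteq> i3 \<and> (j1 = j2 \<or> j2 = j3 \<or> j1 = j3))"
  unfolding negc_def card3_iff card_le2_iff by blast

lemma O_Ostar: "rel_O N u \<Longrightarrow> rel_Ostar N u"
  unfolding rel_Ostar_def using O_rev3 by metis

lemma sgnA: fixes a b c :: "'a::ring"
  assumes "b*a = -(a*b)" "c*a = -(a*c)" "c*b = -(b*c)"
  shows "c*b*a = -(a*b*c)"
proof -
  have "c*b*a = -(b*(c*a))" using assms(3) by (simp add: mult.assoc)
  also have "\<dots> = (b*a)*c" using assms(2) by (simp add: mult.assoc)
  also have "\<dots> = -(a*b*c)" using assms(1) by simp
  finally show ?thesis .
qed

lemma sgnB: fixes a b c :: "'a::ring"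
  assumes "b*a = -(a*b)" "c*a = a*c" "c*b = b*c"
  shows "c*b*a = -(a*b*c)"
proof -
  have "c*b*a = b*(c*a)" using assms(3) by (simp add: mult.assoc)
  also have "\<dots> = (b*a)*c" using assms(2) by (simp add: mult.assoc)
  also have "\<dots> = -(a*b*c)" using assms(1) by simp
  finally show ?thesis .
qed

lemma cube_kill: fixes a b c :: "'a::ring"
  assumes "a = a*a*a" "a*c = 0" "a*b*c = c*b*a"
  shows "a*b*c = 0"
proof -
  have "a*b*c = a*a*(a*b*c)" by (subst assms(1)) (simp add: mult.assoc)
  also have "\<dots> = a*(a*c)*(b*a)" using assms(3) by (simp add: mult.assoc)
  also have "\<dots> = 0" using assms(2) by simp
  finally show ?thesis .
qed

lemma hplus_from:
  assumes orth: "is_orth N u" and N3: "3 \<le> N"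
    and R: "\<And>i j k p m. i<N \<Longrightarrow> j<N \<Longrightarrow> k<N \<Longrightarrow> p<N \<Longrightarrow> m<N \<Longrightarrow> j \<noteq> k \<Longrightarrow> m \<noteq> j \<Longrightarrow> m \<noteq> k \<Longrightarrow>
           u i j * u i k * u p m = 0"
    and C: "\<And>i j k q m. i<N \<Longrightarrow> j<N \<Longrightarrow> k<N \<Longrightarrow> q<N \<Longrightarrow> m<N \<Longrightarrow> j \<noteq> k \<Longrightarrow> m \<noteq> j \<Longrightarrow> m \<noteq> k \<Longrightarrow>
           u j i * u k i * u m q = 0"
  shows "rel_Hplus N u"
proof (rule HplusI)
  fix i j k assume h: "i<N" "j<N" "k<N" "j \<noteq> k"
  obtain m where m: "m<N" "m \<noteq> j" "m \<noteq> k" using third[OF N3] by blast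
  show "u i j * u i k = 0" by (rule kill_col[OF orth m(1)]) (use R h m in blast)
  show "u j i * u k i = 0" by (rule kill_row[OF orth m(1)]) (use C h m in blast)
qed

lemma partA: "(rel_O N u \<and> rel_Obar N u) \<longleftrightarrow> rel_H N u"
proof
  assume h: "rel_O N u \<and> rel_Obar N u"
  have "rel_Hplus N u"
  proof (rule HplusI)
    fix i j k assume a: "i<N" "j<N" "k<N" "j \<noteq> k"
    show "u i j * u i k = 0"
      using ObarA[of N u i j i k] OD[of N u i j i k] h a by (intro neg_self_zero) simp
    show "u j i * u k i = 0"
      using ObarA[of N u j i k i] OD[of N u j i k i] h a by (intro neg_self_zero) simp
  qed
  then show "rel_H N u" using h unfolding rel_H_def by blast
next
  assume h: "rel_H N u"
  then have O: "rel_O N u" and Hp: "rel_Hplus N u" unfolding rel_H_def by auto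
  have "rel_Obar N u"
  proof (rule ObarI)
    fix i j k l assume a: "i<N" "j<N" "k<N" "l<N" "(i, j) \<noteq> (k, l)" "i = k \<or> j = l"
    show "u i j * u k l = - (u k l * u i j)"
    proof (cases "i = k")
      case True
      then have "j \<noteq> l" using a by auto
      then show ?thesis using True HplusR[OF Hp, of i j l] HplusR[OF Hp, of i l j] a by simp
    next
      case False
      then have "j = l" using a by auto
      then show ?thesis using False HplusC[OF Hp, of j i k] HplusC[OF Hp, of j k i] a by simp
    qed
  next
    fix i j k l assume a: "i<N" "j<N" "k<N" "l<N"
    then show "u i j * u k l = u k l * u i j" using OD[OF O] by blast
  qed
  then show "rel_O N u \<and> rel_Obar N u" using O by blast
qed

lemma Hplus_Ostar_Obs:
  assumes orth: "is_orth N u" and Hp: "rel_Hplus N u" and Os: "rel_Ostar N u"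
  shows "rel_Obarstar N u"
proof (rule ObsI)
  fix i1 j1 i2 j2 i3 j3 assume a: "i1<N" "j1<N" "i2<N" "j2<N" "i3<N" "j3<N"
  let ?a = "u i1 j1" and ?b = "u i2 j2" and ?c = "u i3 j3"
  have rev: "?a * ?b * ?c = ?c * ?b * ?a" using OstarD[OF Os a] .
  have z: "?a * ?b * ?c = 0" if n: "negc i1 j1 i2 j2 i3 j3"
  proof -
    from negc_cases[OF n] show ?thesis
    proof
      assume h: "j1 \<noteq> j2 \<and> j1 \<noteq> j3 \<and> j2 \<noteq> j3 \<and> (i1 = i2 \<or> i2 = i3 \<or> i1 = i3)"
      show ?thesis
      proof (cases "i1 = i2")
        case True then show ?thesis using HplusR[OF Hp, of i1 j1 j2] h a by simp
      next
        case F1: False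
        show ?thesis
        proof (cases "i2 = i3")
          case True then show ?thesis using HplusR[OF Hp, of i2 j2 j3] h a by (simp add: mult.assoc)
        next
          case False
          then have "i1 = i3" using h F1 by blast
          then show ?thesis using cube_kill[OF cube_row[OF orth Hp a(1,2)] _ rev]
              HplusR[OF Hp, of i1 j1 j3] h a by simp
        qed
      qed
    next
      assume h: "i1 \<noteq> i2 \<and> i1 \<noteq> i3 \<and> i2 \<noteq> i3 \<and> (j1 = j2 \<or> j2 = j3 \<or> j1 = j3)"
      show ?thesis
      proof (cases "j1 = j2")
        case True then show ?thesis using HplusC[OF Hp, of j1 i1 i2] h a by simp
      next
        case F1: False
        show ?thesis
        proof (cases "j2 = j3")
          case True then show ?thesis using HplusC[OF Hp, of j2 i2 i3] h a by (simp add: mult.assoc)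
        next
          case False
          then have "j1 = j3" using h F1 by blast
          then show ?thesis using cube_kill[OF cube_col[OF orth Hp a(2,1)] _ rev]
              HplusC[OF Hp, of j1 i1 i3] h a by simp
        qed
      qed
    qed
  qed
  show "if negc i1 j1 i2 j2 i3 j3 then ?a * ?b * ?c = - (?c * ?b * ?a) else ?a * ?b * ?c = ?c * ?b * ?a"
    using z rev by auto
qed

lemma partB_fwd:
  assumes orth: "is_orth N u" and N3: "3 \<le> N" and Os: "rel_Ostar N u" and Ob: "rel_Obarstar N u"
  shows "rel_Hplus N u"
proof (rule hplus_from[OF orth N3])
  fix i j k p m assume a: "i<N" "j<N" "k<N" "p<N" "m<N" "j \<noteq> k" "m \<noteq> j" "m \<noteq> k"
  have "u i j * u i k * u p m = - (u p m * u i k * u i j)"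
    using ObsD[OF Ob a(1,2) a(1,3) a(4,5)] negc_row[OF a(6-8)] by simp
  moreover have "u i j * u i k * u p m = u p m * u i k * u i j" using OstarD[OF Os a(1,2) a(1,3) a(4,5)] .
  ultimately show "u i j * u i k * u p m = 0" by (intro neg_self_zero) simp
next
  fix i j k q m assume a: "i<N" "j<N" "k<N" "q<N" "m<N" "j \<noteq> k" "m \<noteq> j" "m \<noteq> k"
  have "u j i * u k i * u m q = - (u m q * u k i * u j i)"
    using ObsD[OF Ob a(2,1) a(3,1) a(5,4)] negc_col[OF a(6-8)] by simp
  moreover have "u j i * u k i * u m q = u m q * u k i * u j i" using OstarD[OF Os a(2,1) a(3,1) a(5,4)] .
  ultimately show "u j i * u k i * u m q = 0" by (intro neg_self_zero) simp
qed

lemma O_from_Hplus_Obar: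
  assumes Hp: "rel_Hplus N u" and Ob: "rel_Obar N u"
  shows "rel_O N u"
  unfolding rel_O_def
proof (intro allI impI)
  fix i j k l assume a: "i<N" "j<N" "k<N" "l<N"
  show "u i j * u k l = u k l * u i j"
  proof (cases "(i, j) = (k, l)")
    case True then show ?thesis by simp
  next
    case ne: False
    show ?thesis
    proof (cases "i = k")
      case True
      then have "j \<noteq> l" using ne by auto
      then show ?thesis using True HplusR[OF Hp, of i j l] HplusR[OF Hp, of i l j] a by simp
    next
      case F: False
      show ?thesis
      proof (cases "j = l")
        case True
        then show ?thesis using F HplusC[OF Hp, of j i k] HplusC[OF Hp, of j k i] a by simp
      next
        case False
        then show ?thesis using ObarC[OF Ob a F] by simp
      qed
    qed
  qed
qed

lemma partC_fwd:
  assumes orth: "is_orth N u" and N3: "3 \<le> N" and Os: "rel_Ostar N u" and Ob: "rel_Obar N u"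
  shows "rel_Hplus N u"
proof (rule hplus_from[OF orth N3])
  fix i j k p m assume a: "i<N" "j<N" "k<N" "p<N" "m<N" "j \<noteq> k" "m \<noteq> j" "m \<noteq> k"
  have ba: "u i k * u i j = - (u i j * u i k)" using ObarA[OF Ob a(1,3) a(1,2)] a by simp
  have "u p m * u i k * u i j = - (u i j * u i k * u p m)"
  proof (cases "p = i")
    case True
    show ?thesis
      by (rule sgnA[OF ba]) (use ObarA[OF Ob a(4,5) a(1,2)] ObarA[OF Ob a(4,5) a(1,3)] a True in auto)
  next
    case False
    show ?thesis
      by (rule sgnB[OF ba]) (use ObarC[OF Ob a(4,5) a(1,2)] ObarC[OF Ob a(4,5) a(1,3)] a False in auto)
  qed
  moreover have "u i j * u i k * u p m = u p m * u i k * u i j" using OstarD[OF Os a(1,2) a(1,3) a(4,5)] .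
  ultimately show "u i j * u i k * u p m = 0" by (intro neg_self_zero) simp
next
  fix i j k q m assume a: "i<N" "j<N" "k<N" "q<N" "m<N" "j \<noteq> k" "m \<noteq> j" "m \<noteq> k"
  have ba: "u k i * u j i = - (u j i * u k i)" using ObarA[OF Ob a(3,1) a(2,1)] a by simp
  have "u m q * u k i * u j i = - (u j i * u k i * u m q)"
  proof (cases "q = i")
    case True
    show ?thesis
      by (rule sgnA[OF ba]) (use ObarA[OF Ob a(5,4) a(2,1)] ObarA[OF Ob a(5,4) a(3,1)] a True in auto)
  next
    case False
    show ?thesis
      by (rule sgnB[OF ba]) (use ObarC[OF Ob a(5,4) a(2,1)] ObarC[OF Ob a(5,4) a(3,1)] a False in auto)
  qed
  moreover have "u j i * u k i * u m q = u m q * u k i * u j i" using OstarD[OF Os a(2,1) a(3,1) a(5,4)] .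
  ultimately show "u j i * u k i * u m q = 0" by (intro neg_self_zero) simp
qed

lemma Obs2:
  assumes "rel_Ostar 2 u" shows "rel_Obarstar 2 u"
proof (rule ObsI)
  fix i1 j1 i2 j2 i3 j3 :: nat
  assume a: "i1<2" "j1<2" "i2<2" "j2<2" "i3<2" "j3<2"
  have "card {i1, i2, i3} \<le> card {0::nat, 1}"
    by (rule card_mono) (use a in auto)
  moreover have "card {j1, j2, j3} \<le> card {0::nat, 1}"
    by (rule card_mono) (use a in auto)
  ultimately have "\<not> negc i1 j1 i2 j2 i3 j3" unfolding negc_def by simp
  then show "if negc i1 j1 i2 j2 i3 j3
           then u i1 j1 * u i2 j2 * u i3 j3 = - (u i3 j3 * u i2 j2 * u i1 j1)
           else u i1 j1 * u i2 j2 * u i3 j3 = u i3 j3 * u i2 j2 * u i1 j1"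
    using OstarD[OF assms a] by simp
qed

theorem proposition4p2:
  fixes N :: nat and u :: "nat \<Rightarrow> nat \<Rightarrow> 'a::cstar_algebra"
  assumes "is_orth N u"
  shows "(N \<ge> 3 \<longrightarrow>
            ((rel_O N u \<and> rel_Obar N u) \<longleftrightarrow> rel_H N u) \<and>
            ((rel_O N u \<and> rel_Obarstar N u) \<longleftrightarrow> rel_H N u) \<and>
            ((rel_Ostar N u \<and> rel_Obar N u) \<longleftrightarrow> rel_H N u) \<and>
            ((rel_Ostar N u \<and> rel_Obarstar N u) \<longleftrightarrow> rel_Hstar N u))
       \<and> (N = 2 \<longrightarrow>
            ((rel_O N u \<and> rel_Obar N u) \<longleftrightarrow> rel_H N u) \<and>
            ((rel_O N u \<and> rel_Obarstar N u) \<longleftrightarrow> rel_O N u) \<and>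
            ((rel_Ostar N u \<and> rel_Obar N u) \<longleftrightarrow> rel_Obar N u) \<and>
            ((rel_Ostar N u \<and> rel_Obarstar N u) \<longleftrightarrow> True))"
proof (intro conjI impI)
  assume N3: "N \<ge> 3"
  show "(rel_O N u \<and> rel_Obar N u) \<longleftrightarrow> rel_H N u" by (rule partA)
  show "(rel_O N u \<and> rel_Obarstar N u) \<longleftrightarrow> rel_H N u"
    using partB_fwd[OF assms N3 O_Ostar] Hplus_Ostar_Obs[OF assms _ O_Ostar]
    unfolding rel_H_def by blast
  show "(rel_Ostar N u \<and> rel_Obar N u) \<longleftrightarrow> rel_H N u"
    using partC_fwd[OF assms N3] O_from_Hplus_Obar O_Ostar partA[of N u]
    unfolding rel_H_def by blast
  show "(rel_Ostar N u \<and> rel_Obarstar N u) \<longleftrightarrow> rel_Hstar N u"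
    using partB_fwd[OF assms N3] Hplus_Ostar_Obs[OF assms]
    unfolding rel_Hstar_def by blast
next
  assume N2: "N = 2"
  have Os: "rel_Ostar N u" using orth2_Ostar assms N2 by simp
  have Ob: "rel_Obarstar N u" using Obs2 Os N2 by simp
  show "(rel_O N u \<and> rel_Obar N u) \<longleftrightarrow> rel_H N u" by (rule partA)
  show "(rel_O N u \<and> rel_Obarstar N u) \<longleftrightarrow> rel_O N u" using Ob by blast
  show "(rel_Ostar N u \<and> rel_Obar N u) \<longleftrightarrow> rel_Obar N u" using Os by blast
  show "(rel_Ostar N u \<and> rel_Obarstar N u) \<longleftrightarrow> True" using Os Ob by blast
qed

end
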